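(* Let $m$ be an integer and $n$ a positive integer. In $\mathbb Q\otimes\mathsf F$ one has $$\mathsf P_n=\sum_{i|n,\ j|n}c(i,j)\,\Psi^{n/i}(x_i)\,\Psi^{n/j}(y_j),\qquad c(i,j)=\frac{(1-m)\,ij}{n}\sum_{e\,|\,\frac{n}{[i,j]}}\Big[\frac{n}{ei}\Big]_m\Big[\frac{n}{ej}\Big]_m\mu_m(e),$$ where $[i,j]$ denotes the least common multiple of $i$ and $j$.
   Context: Let $\mathsf F$ be the free $\Psi$-ring on indeterminates $x_n,y_n$ ($n\ge1$); as a ring $\mathsf F=\mathbb Z[\Psi^k(x_n),\Psi^k(y_n):k,n\ge1]$, and $\Psi^k\Psi^l=\Psi^{kl}$, $\Psi^1=\mathrm{id}$, each $\Psi^k$ a unital ring endomorphism. For $k\ge1$, $[k]_m=1+m+\dots+m^{k-1}$. Define $\mathsf P_n\in\mathbb Q\otimes\mathsf F$ recursively by $\sum_{d|n}d[\frac nd]_m\Psi^{n/d}(\mathsf P_d)=(1-m)\big(\sum_{d|n}d[\frac nd]_m\Psi^{n/d}(x_d)\big)\big(\sum_{d|n}d[\frac nd]_m\Psi^{n/d}(y_d)\big)$ for all $n\ge1$. For a positive integer $e$, $\mu_m(e)=\sum_C \mathrm{wt}_m(C)$, the sum over all chains $C=(1=z_r\prec z_{r-1}\prec\cdots\prec z_0=e)$ ($r\ge0$) of positive integers where $a\prec b$ means $a\mid b$ and $a\neq b$, with $\mathrm{wt}_m(C)=(-1)^r[z_0/z_1]_m[z_1/z_2]_m\cdots[z_{r-1}/z_r]_m$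 (the empty product, for $r=0$ and $e=1$, equals $1$). *)

theory Defs
  imports Complex_Main "HOL-Library.Poly_Mapping"
begin

text \<open>Variables of the polynomial ring underlying the free Psi-ring.
  The variable (a, b, False) stands for Psi^(a+1)(x_(b+1)), and
  (a, b, True) stands for Psi^(a+1)(y_(b+1)).\<close>
type_synonym psivar = "nat \<times> nat \<times> bool"

text \<open>Q tensor F = Q[Psi^k(x_n), Psi^k(y_n) : k, n >= 1], realised as
  polynomials with rational coefficients in the variables above
  (monomials are finitely supported exponent vectors).\<close>
type_synonym QF = "(psivar \<Rightarrow>\<^sub>0 nat) \<Rightarrow>\<^sub>0 rat"

definition QF_const :: "rat \<Rightarrow> QF" where
  "QF_const c = Poly_Mapping.single 0 c"

definition QF_var :: "psivar \<Rightarrow> QF" where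
  "QF_var v = Poly_Mapping.single (Poly_Mapping.single v 1) 1"

definition QF_subst :: "(psivar \<Rightarrow> QF) \<Rightarrow> QF \<Rightarrow> QF" where
  "QF_subst \<sigma> p =
     (\<Sum>mo\<in>Poly_Mapping.keys p.
        QF_const (Poly_Mapping.lookup p mo) *
        (\<Prod>v\<in>Poly_Mapping.keys mo. \<sigma> v ^ Poly_Mapping.lookup mo v))"

text \<open>The Adams operation Psi^k (k >= 1): the ring endomorphism sending
  Psi^l(x_n) to Psi^(kl)(x_n) and Psi^l(y_n) to Psi^(kl)(y_n).\<close>
definition Psi :: "nat \<Rightarrow> QF \<Rightarrow> QF" where
  "Psi k = QF_subst (\<lambda>(a, b, c). QF_var (k * (a + 1) - 1, b, c))"

definition xv :: "nat \<Rightarrow> QF" where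
  "xv n = QF_var (0, n - 1, False)"

definition yv :: "nat \<Rightarrow> QF" where
  "yv n = QF_var (0, n - 1, True)"

definition qint :: "nat \<Rightarrow> int \<Rightarrow> int" where
  "qint k m = (\<Sum>i<k. m ^ i)"

definition div_chains :: "nat \<Rightarrow> nat list set" where
  "div_chains e = {zs. zs \<noteq> [] \<and> hd zs = e \<and> last zs = 1 \<and>
      (\<forall>i. Suc i < length zs \<longrightarrow> zs ! Suc i dvd zs ! i \<and> zs ! Suc i \<noteq> zs ! i)}"

definition chain_wt :: "int \<Rightarrow> nat list \<Rightarrow> int" where
  "chain_wt m zs = (-1) ^ (length zs - 1) *
      (\<Prod>i<length zs - 1. qint (zs ! i div zs ! Suc i) m)"

definition mu_m :: "int \<Rightarrow> nat \<Rightarrow> int" where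
  "mu_m m e = (\<Sum>zs\<in>div_chains e. chain_wt m zs)"

definition coef_c :: "int \<Rightarrow> nat \<Rightarrow> nat \<Rightarrow> nat \<Rightarrow> rat" where
  "coef_c m n i j = of_int (1 - m) * of_nat (i * j) / of_nat n *
     of_int (\<Sum>e\<in>{e. e dvd n div lcm i j}.
               qint (n div (e * i)) m * qint (n div (e * j)) m * mu_m m e)"

definition P_rec :: "int \<Rightarrow> (nat \<Rightarrow> QF) \<Rightarrow> nat \<Rightarrow> bool" where
  "P_rec m P n \<longleftrightarrow>
     (\<Sum>d\<in>{d. d dvd n}. of_int (int d * qint (n div d) m) * Psi (n div d) (P d)) =
     of_int (1 - m) *
       (\<Sum>d\<in>{d. d dvd n}. of_int (int d * qint (n div d) m) * Psi (n div d) (xv d)) *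
       (\<Sum>d\<in>{d. d dvd n}. of_int (int d * qint (n div d) m) * Psi (n div d) (yv d))"

end

theory Submission
  imports Defs
begin


lemma div_chains_1: "div_chains 1 = {[1]}"
proof
  show "div_chains 1 \<subseteq> {[1]}"
  proof
    fix zs assume z: "zs \<in> div_chains 1"
    then obtain ws where zs: "zs = 1 # ws"
      unfolding div_chains_def by (cases zs) auto
    have "ws = []"
    proof (rule ccontr)
      assume "ws \<noteq> []"
      then have "Suc 0 < length zs" using zs by simp
      with z have "zs ! 1 dvd zs ! 0" "zs ! 1 \<noteq> zs ! 0" unfolding div_chains_def by auto
      then show False using zs by simp
    qed
    then show "zs \<in> {[1]}" using zs by simp
  qed
next
  show "{[1]} \<subseteq> div_chains 1" unfolding div_chains_def by auto
qed

lemma div_chains_Suc0 [simp]: "div_chains (Suc 0) = {[Suc 0]}"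
  using div_chains_1 by simp

lemma div_chains_rec:
  assumes "e > 1"
  shows "div_chains e = (\<Union>d\<in>{d. d dvd e} - {e}. Cons e ` div_chains d)"
proof
  show "div_chains e \<subseteq> (\<Union>d\<in>{d. d dvd e} - {e}. Cons e ` div_chains d)"
  proof
    fix zs assume z: "zs \<in> div_chains e"
    then obtain ws where zs: "zs = e # ws"
      unfolding div_chains_def by (cases zs) auto
    have wsne: "ws \<noteq> []" using z zs assms unfolding div_chains_def by auto
    have c: "\<And>i. Suc i < length zs \<Longrightarrow> zs ! Suc i dvd zs ! i \<and> zs ! Suc i \<noteq> zs ! i"
      using z unfolding div_chains_def by auto
    have "zs ! 1 dvd zs ! 0" "zs ! 1 \<noteq> zs ! 0" using c[of 0] wsne zs by auto
    then have d: "hd ws dvd e" "hd ws \<noteq> e" using zs wsne by (auto simp: hd_conv_nth)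
    have "ws \<in> div_chains (hd ws)"
      unfolding div_chains_def
    proof (rule CollectI, intro conjI)
      show "ws \<noteq> []" by fact
      show "hd ws = hd ws" by simp
      show "last ws = 1" using z zs wsne unfolding div_chains_def by auto
      show "\<forall>i. Suc i < length ws \<longrightarrow> ws ! Suc i dvd ws ! i \<and> ws ! Suc i \<noteq> ws ! i"
        using c zs by force
    qed
    then show "zs \<in> (\<Union>d\<in>{d. d dvd e} - {e}. Cons e ` div_chains d)"
      using d zs by auto
  qed
next
  show "(\<Union>d\<in>{d. d dvd e} - {e}. Cons e ` div_chains d) \<subseteq> div_chains e"
  proof
    fix zs assume "zs \<in> (\<Union>d\<in>{d. d dvd e} - {e}. Cons e ` div_chains d)"
    then obtain d ws where d: "d dvd e" "d \<noteq> e" and ws: "ws \<in> div_chains d" and zs: "zs = e # ws"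
      by auto
    have wsne: "ws \<noteq> []" and hd: "hd ws = d" and lst: "last ws = 1"
      and c: "\<And>i. Suc i < length ws \<Longrightarrow> ws ! Suc i dvd ws ! i \<and> ws ! Suc i \<noteq> ws ! i"
      using ws unfolding div_chains_def by auto
    show "zs \<in> div_chains e"
      unfolding div_chains_def
    proof (rule CollectI, intro conjI)
      show "zs \<noteq> []" "hd zs = e" using zs by auto
      show "last zs = 1" using zs wsne lst by auto
    next
      show "\<forall>i. Suc i < length zs \<longrightarrow> zs ! Suc i dvd zs ! i \<and> zs ! Suc i \<noteq> zs ! i"
      proof (intro allI impI)
      fix i assume i: "Suc i < length zs"
      show "zs ! Suc i dvd zs ! i \<and> zs ! Suc i \<noteq> zs ! i"
      proof (cases i)
        case 0
        then show ?thesis using zs d hd wsne by (auto simp: hd_conv_nth)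
      next
        case (Suc k)
        then show ?thesis using c[of k] i zs by auto
      qed
      qed
    qed
  qed
qed

lemma finite_div_chains: "e \<ge> 1 \<Longrightarrow> finite (div_chains e)"
proof (induction e rule: less_induct)
  case (less e)
  show ?case
  proof (cases "e = 1")
    case True then show ?thesis by (simp add: div_chains_1)
  next
    case False
    then have e1: "e > 1" using less.prems by simp
    have fin: "finite ({d. d dvd e} - {e})" using e1 by simp
    have "\<And>d. d \<in> {d. d dvd e} - {e} \<Longrightarrow> finite (Cons e ` div_chains d)"
    proof -
      fix d assume d: "d \<in> {d. d dvd e} - {e}"
      then have "d \<le> e" "d \<noteq> e" "d \<ge> 1" using e1 by (auto intro: dvd_imp_le dest: dvd_pos_nat[rotated])
      then show "finite (Cons e ` div_chains d)" using less.IH[of d] by simp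
    qed
    then show ?thesis using fin by (simp add: div_chains_rec[OF e1])
  qed
qed

lemma chain_wt_Cons:
  assumes "ws \<noteq> []"
  shows "chain_wt m (e # ws) = - qint (e div hd ws) m * chain_wt m ws"
proof -
  obtain k where k: "length ws = Suc k" using assms by (cases ws) auto
  have "chain_wt m (e # ws) = (-1) ^ Suc k * (\<Prod>i<Suc k. qint ((e # ws) ! i div (e # ws) ! Suc i) m)"
    unfolding chain_wt_def using k by simp
  also have "\<dots> = (-1) ^ Suc k * (qint (e div ws ! 0) m * (\<Prod>i<k. qint (ws ! i div ws ! Suc i) m))"
    unfolding prod.lessThan_Suc_shift by simp
  also have "\<dots> = - qint (e div hd ws) m * chain_wt m ws"
    unfolding chain_wt_def using k assms by (simp add: hd_conv_nth)
  finally show ?thesis .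
qed

lemma mu_m_1: "mu_m m 1 = 1"
  by (simp add: mu_m_def div_chains_1 chain_wt_def)

lemma mu_m_rec:
  assumes "e > 1"
  shows "mu_m m e = - (\<Sum>d\<in>{d. d dvd e} - {e}. qint (e div d) m * mu_m m d)"
proof -
  have fin: "finite ({d. d dvd e} - {e})" using assms by simp
  have pos: "\<And>d. d \<in> {d. d dvd e} - {e} \<Longrightarrow> d \<ge> 1" using assms
    by (auto intro: dvd_pos_nat[rotated])
  have "mu_m m e = (\<Sum>zs\<in>(\<Union>d\<in>{d. d dvd e} - {e}. Cons e ` div_chains d). chain_wt m zs)"
    unfolding mu_m_def div_chains_rec[OF assms] ..
  also have "\<dots> = (\<Sum>d\<in>{d. d dvd e} - {e}. \<Sum>zs\<in>Cons e ` div_chains d. chain_wt m zs)"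
  proof (rule sum.UNION_disjoint)
    show "finite ({d. d dvd e} - {e})" by fact
    show "\<forall>d\<in>{d. d dvd e} - {e}. finite (Cons e ` div_chains d)"
      using pos finite_div_chains by blast
    show "\<forall>i\<in>{d. d dvd e} - {e}. \<forall>j\<in>{d. d dvd e} - {e}. i \<noteq> j \<longrightarrow>
            Cons e ` div_chains i \<inter> Cons e ` div_chains j = {}"
      unfolding div_chains_def by auto
  qed
  also have "\<dots> = (\<Sum>d\<in>{d. d dvd e} - {e}. \<Sum>ws\<in>div_chains d. chain_wt m (e # ws))"
    apply (rule sum.cong[OF refl])
    apply (subst sum.reindex)
     apply (auto simp: inj_on_def)
    done
  also have "\<dots> = (\<Sum>d\<in>{d. d dvd e} - {e}. \<Sum>ws\<in>div_chains d. - qint (e div d) m * chain_wt m ws)"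
    by (intro sum.cong refl, subst chain_wt_Cons) (auto simp: div_chains_def)
  also have "\<dots> = - (\<Sum>d\<in>{d. d dvd e} - {e}. qint (e div d) m * mu_m m d)"
    by (simp add: mu_m_def sum_distrib_left sum_negf)
  finally show ?thesis .
qed

lemma qint_1 [simp]: "qint 1 m = 1" by (simp add: qint_def)
lemma qint_Suc0 [simp]: "qint (Suc 0) m = 1" by (simp add: qint_def)
lemma mu_m_Suc0 [simp]: "mu_m m (Suc 0) = 1" using mu_m_1 by simp

lemma mu_inverse:
  assumes "M \<ge> 1"
  shows "(\<Sum>e\<in>{e. e dvd M}. mu_m m e * qint (M div e) m) = (if M = 1 then 1 else 0)"
proof (cases "M = 1")
  case True then show ?thesis by (simp add: mu_m_1)
next
  case False
  then have M: "M > 1" using assms by simp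
  have fin: "finite {e. e dvd M}" using M by simp
  have "(\<Sum>e\<in>{e. e dvd M}. mu_m m e * qint (M div e) m) =
        mu_m m M * qint (M div M) m + (\<Sum>e\<in>{e. e dvd M} - {M}. mu_m m e * qint (M div e) m)"
    using fin by (subst sum.remove[of _ M]) auto
  also have "\<dots> = 0" using M by (simp add: mu_m_rec[OF M] mult.commute)
  finally show ?thesis using False by simp
qed



lemma div_pos_dvd: "(s::nat) dvd N \<Longrightarrow> N > 0 \<Longrightarrow> N div s > 0"
  by (metis dvd_div_mult_self mult_0 neq0_conv)

lemma conv_assoc:
  fixes h :: "nat \<Rightarrow> int"
  assumes N: "N \<ge> 1"
  shows "(\<Sum>t\<in>{t. t dvd N}. qint (N div t) m * (\<Sum>e\<in>{e. e dvd t}. h (t div e) * mu_m m e)) = h N"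
proof -
  define F where "F = (\<lambda>(t::nat, e::nat). qint (N div t) m * (h (t div e) * mu_m m e))"
  have finD: "\<And>x::nat. x \<ge> 1 \<Longrightarrow> finite {t. t dvd x}" by simp
  have Npos: "N > 0" using N by simp
  have "(\<Sum>t\<in>{t. t dvd N}. qint (N div t) m * (\<Sum>e\<in>{e. e dvd t}. h (t div e) * mu_m m e))
      = (\<Sum>t\<in>{t. t dvd N}. \<Sum>e\<in>{e. e dvd t}. F (t, e))"
    by (simp add: F_def sum_distrib_left)
  also have "\<dots> = (\<Sum>p\<in>(SIGMA t:{t. t dvd N}. {e. e dvd t}). F p)"
    using Npos by (subst sum.Sigma) (auto intro: dvd_pos_nat[rotated])
  also have "\<dots> = (\<Sum>q\<in>(SIGMA s:{s. s dvd N}. {e. e dvd N div s}). F (fst q * snd q, snd q))"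
  proof (rule sum.reindex_bij_witness[where i = "\<lambda>(s, e). (s * e, e)" and j = "\<lambda>(t, e). (t div e, e)"])
    fix a assume a: "a \<in> (SIGMA t:{t. t dvd N}. {e. e dvd t})"
    then obtain t e where te: "a = (t, e)" "t dvd N" "e dvd t" by auto
    show "(case (case a of (t, e) \<Rightarrow> (t div e, e)) of (s, e) \<Rightarrow> (s * e, e)) = a"
      using te by simp
    obtain k where k: "N = t * k" using te by (auto elim: dvdE)
    obtain s where s: "t = e * s" using te by (auto elim: dvdE)
    have epos: "e > 0" "s > 0" using Npos k s by auto
    have "t div e = s" using s epos by simp
    moreover have "N div s = e * k" using k s epos by simp
    ultimately show "(case a of (t, e) \<Rightarrow> (t div e, e)) \<in> (SIGMA s:{s. s dvd N}. {e. e dvd N div s})"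
      using te k s by auto
  next
    fix b assume b: "b \<in> (SIGMA s:{s. s dvd N}. {e. e dvd N div s})"
    then obtain s e where se: "b = (s, e)" "s dvd N" "e dvd N div s" by auto
    obtain k where k: "N div s = e * k" using se by (auto elim: dvdE)
    have Ns: "N = s * (N div s)" using se by simp
    have pos: "e > 0" "s > 0" using Npos Ns k by (auto simp del: mult_eq_0_iff)
    show "(case (case b of (s, e) \<Rightarrow> (s * e, e)) of (t, e) \<Rightarrow> (t div e, e)) = b"
      using se pos by simp
    have "s * e dvd N" using Ns k by (metis dvd_triv_left mult.assoc)
    then show "(case b of (s, e) \<Rightarrow> (s * e, e)) \<in> (SIGMA t:{t. t dvd N}. {e. e dvd t})"
      using se by auto
  next
    fix a assume a: "a \<in> (SIGMA t:{t. t dvd N}. {e. e dvd t})"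
    then obtain t e where te: "a = (t, e)" "t dvd N" "e dvd t" by auto
    then show "F (fst (case a of (t, e) \<Rightarrow> (t div e, e)) * snd (case a of (t, e) \<Rightarrow> (t div e, e)),
               snd (case a of (t, e) \<Rightarrow> (t div e, e))) = F a" by simp
  qed
  also have "\<dots> = (\<Sum>s\<in>{s. s dvd N}. \<Sum>e\<in>{e. e dvd N div s}. F (s * e, e))"
    using Npos by (subst sum.Sigma) (auto intro: dvd_pos_nat[rotated] simp: div_pos_dvd dvd_imp_le split_def)
  also have "\<dots> = (\<Sum>s\<in>{s. s dvd N}. h s * (\<Sum>e\<in>{e. e dvd N div s}. mu_m m e * qint (N div s div e) m))"
  proof (rule sum.cong[OF refl])
    fix s assume s: "s \<in> {s. s dvd N}"
    have "s > 0" using s Npos by (auto intro: dvd_pos_nat[rotated])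
    have "\<And>e. e dvd N div s \<Longrightarrow> F (s * e, e) = h s * (mu_m m e * qint (N div s div e) m)"
    proof -
      fix e assume e: "e dvd N div s"
      have "N div s > 0" using s Npos by (simp add: div_pos_dvd dvd_imp_le)
      then have "e > 0" using e by (auto intro: dvd_pos_nat)
      then show "F (s * e, e) = h s * (mu_m m e * qint (N div s div e) m)"
        by (simp add: F_def div_mult2_eq)
    qed
    then show "(\<Sum>e\<in>{e. e dvd N div s}. F (s * e, e)) = h s * (\<Sum>e\<in>{e. e dvd N div s}. mu_m m e * qint (N div s div e) m)"
      by (simp add: sum_distrib_left)
  qed
  also have "\<dots> = (\<Sum>s\<in>{s. s dvd N}. h s * (if N div s = 1 then 1 else 0))"
  proof (rule sum.cong[OF refl])
    fix s assume s: "s \<in> {s. s dvd N}"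
    have "N div s \<ge> 1" using s Npos by (simp add: div_pos_dvd dvd_imp_le Suc_leI)
    then show "h s * (\<Sum>e\<in>{e. e dvd N div s}. mu_m m e * qint (N div s div e) m) = h s * (if N div s = 1 then 1 else 0)"
      by (simp only: mu_inverse)
  qed
  also have "\<dots> = (\<Sum>s\<in>{s. s dvd N}. if s = N then h s else 0)"
  proof (rule sum.cong[OF refl])
    fix s assume s: "s \<in> {s. s dvd N}"
    have "N div s = 1 \<longleftrightarrow> s = N"
      using s Npos by (metis div_self dvd_mult_div_cancel mem_Collect_eq mult.right_neutral nat_less_le)
    then show "h s * (if N div s = 1 then 1 else 0) = (if s = N then h s else 0)" by simp
  qed
  also have "\<dots> = h N" using Npos by (simp add: sum.delta)
  finally show ?thesis .
qed



lemma coef_int: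
  assumes n: "n \<ge> 1" and i: "i dvd n" and j: "j dvd n"
  shows "(\<Sum>d\<in>{d. d dvd n \<and> i dvd d \<and> j dvd d}. qint (n div d) m *
            (\<Sum>e\<in>{e. e dvd d div lcm i j}. qint (d div (e * i)) m * qint (d div (e * j)) m * mu_m m e))
         = qint (n div i) m * qint (n div j) m"
proof -
  define L where "L = lcm i j"
  have npos: "n > 0" using n by simp
  have ipos: "i > 0" and jpos: "j > 0" using i j npos by (auto intro: dvd_pos_nat[rotated])
  have Lpos: "L > 0" using ipos jpos by (simp add: L_def lcm_pos_nat)
  have Ln: "L dvd n" using i j by (simp add: L_def)
  define N where "N = n div L"
  have nLN: "n = L * N" using Ln by (simp add: N_def)
  have Npos: "N \<ge> 1" using npos nLN by (simp add: Suc_leI)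
  define a where "a = L div i"
  define b where "b = L div j"
  have La: "L = i * a" using L_def a_def by simp
  have Lb: "L = j * b" using L_def b_def by simp
  define h where "h = (\<lambda>s. qint (a * s) m * qint (b * s) m)"
  have set_eq: "{d. d dvd n \<and> i dvd d \<and> j dvd d} = (\<lambda>t. L * t) ` {t. t dvd N}"
  proof (rule set_eqI, rule iffI)
    fix d assume "d \<in> {d. d dvd n \<and> i dvd d \<and> j dvd d}"
    then have d: "d dvd n" "L dvd d" by (auto simp: L_def)
    then obtain t where t: "d = L * t" by (auto elim: dvdE)
    have "t dvd N" using d t nLN Lpos by auto
    then show "d \<in> (\<lambda>t. L * t) ` {t. t dvd N}" using t by auto
  next
    fix d assume "d \<in> (\<lambda>t. L * t) ` {t. t dvd N}"
    then obtain t where t: "d = L * t" "t dvd N" by auto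
    have "i dvd L" "j dvd L" by (auto simp: L_def)
    then show "d \<in> {d. d dvd n \<and> i dvd d \<and> j dvd d}" using t nLN by auto
  qed
  have "(\<Sum>d\<in>{d. d dvd n \<and> i dvd d \<and> j dvd d}. qint (n div d) m *
            (\<Sum>e\<in>{e. e dvd d div L}. qint (d div (e * i)) m * qint (d div (e * j)) m * mu_m m e))
      = (\<Sum>t\<in>{t. t dvd N}. qint (n div (L * t)) m *
            (\<Sum>e\<in>{e. e dvd (L * t) div L}. qint ((L * t) div (e * i)) m * qint ((L * t) div (e * j)) m * mu_m m e))"
    unfolding set_eq using Lpos by (subst sum.reindex) (auto simp: inj_on_def)
  also have "\<dots> = (\<Sum>t\<in>{t. t dvd N}. qint (N div t) m * (\<Sum>e\<in>{e. e dvd t}. h (t div e) * mu_m m e))"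
  proof (rule sum.cong[OF refl])
    fix t assume t: "t \<in> {t. t dvd N}"
    have 1: "n div (L * t) = N div t" using nLN Lpos by simp
    have 2: "(L * t) div L = t" using Lpos by simp
    have 3: "qint ((L * t) div (e * i)) m * qint ((L * t) div (e * j)) m = h (t div e)"
      if e: "e dvd t" for e
    proof -
      obtain s where s: "t = e * s" using e by (auto elim: dvdE)
      have epos: "e > 0" using s t Npos by (auto intro: dvd_pos_nat[rotated])
      have te: "t div e = s" using s epos by simp
      have x1: "L * t = (e * i) * (a * s)" using s La by (simp add: ac_simps)
      have y1: "L * t div (e * i) = a * s" unfolding x1 using epos ipos by simp
      have x2: "L * t = (e * j) * (b * s)" using s Lb by (simp add: ac_simps)
      have y2: "L * t div (e * j) = b * s" unfolding x2 using epos jpos by simp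
      from y1 y2 have "L * t div (e * i) = a * (t div e)" "L * t div (e * j) = b * (t div e)"
        using te by auto
      then show ?thesis by (simp add: h_def)
    qed
    show "qint (n div (L * t)) m *
            (\<Sum>e\<in>{e. e dvd (L * t) div L}. qint ((L * t) div (e * i)) m * qint ((L * t) div (e * j)) m * mu_m m e)
        = qint (N div t) m * (\<Sum>e\<in>{e. e dvd t}. h (t div e) * mu_m m e)"
      unfolding 1 2 by (intro arg_cong2[where f="(*)"] refl sum.cong) (simp_all add: 3)
  qed
  also have "\<dots> = h N" by (rule conv_assoc[OF Npos])
  also have "\<dots> = qint (n div i) m * qint (n div j) m"
  proof -
    have "n = i * (a * N)" using nLN La by simp
    then have "n div i = a * N" using ipos by simp
    moreover have "n = j * (b * N)" using nLN Lb by simp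
    then have "n div j = b * N" using jpos by simp
    ultimately show ?thesis by (simp add: h_def)
  qed
  finally show ?thesis unfolding L_def .
qed



definition ev :: "(psivar \<Rightarrow> QF) \<Rightarrow> (psivar \<Rightarrow>\<^sub>0 nat) \<Rightarrow> QF" where
  "ev \<sigma> mo = (\<Prod>v\<in>Poly_Mapping.keys mo. \<sigma> v ^ Poly_Mapping.lookup mo v)"

lemma QF_const_0 [simp]: "QF_const 0 = 0" by (simp add: QF_const_def)
lemma QF_const_1 [simp]: "QF_const 1 = 1" by (simp add: QF_const_def)
lemma QF_const_add: "QF_const (a + b) = QF_const a + QF_const b"
  by (simp add: QF_const_def single_add)
lemma QF_const_mult: "QF_const (a * b) = QF_const a * QF_const b"
  by (simp add: QF_const_def mult_single)
lemma QF_const_of_int: "(of_int k :: QF) = QF_const (of_int k)"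
  by (simp add: QF_const_def)
lemma QF_const_sum: "QF_const (sum f A) = (\<Sum>x\<in>A. QF_const (f x))"
  by (induction A rule: infinite_finite_induct) (auto simp: QF_const_add)

lemma QF_subst_superset:
  assumes "finite S" "Poly_Mapping.keys p \<subseteq> S"
  shows "QF_subst \<sigma> p = (\<Sum>mo\<in>S. QF_const (Poly_Mapping.lookup p mo) * ev \<sigma> mo)"
  unfolding QF_subst_def ev_def
  by (rule sum.mono_neutral_left) (use assms in \<open>auto simp: in_keys_iff\<close>)

lemma QF_subst_add: "QF_subst \<sigma> (p + q) = QF_subst \<sigma> p + QF_subst \<sigma> q"
proof -
  let ?S = "Poly_Mapping.keys p \<union> Poly_Mapping.keys q"
  have k: "Poly_Mapping.keys (p + q) \<subseteq> ?S" by (rule keys_add)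
  show ?thesis
    by (simp add: QF_subst_superset[OF _ k] QF_subst_superset[of ?S p] QF_subst_superset[of ?S q]
        lookup_add QF_const_add distrib_right sum.distrib)
qed

lemma QF_subst_0 [simp]: "QF_subst \<sigma> 0 = 0"
  by (simp add: QF_subst_def)

lemma QF_subst_sum: "QF_subst \<sigma> (sum f A) = (\<Sum>x\<in>A. QF_subst \<sigma> (f x))"
  by (induction A rule: infinite_finite_induct) (auto simp: QF_subst_add)

lemma QF_subst_single: "QF_subst \<sigma> (Poly_Mapping.single mo c) = QF_const c * ev \<sigma> mo"
  by (subst QF_subst_superset[of "{mo}"]) auto

lemma ev_single: "ev \<sigma> (Poly_Mapping.single v 1) = \<sigma> v"
  by (simp add: ev_def)

lemma QF_subst_var: "QF_subst \<sigma> (QF_var v) = \<sigma> v"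
  by (simp add: QF_var_def QF_subst_single ev_def)

lemma QF_subst_mono2:
  assumes "v \<noteq> w"
  shows "QF_subst \<sigma> (QF_const c * QF_var v * QF_var w) = QF_const c * \<sigma> v * \<sigma> w"
proof -
  have e: "QF_const c * QF_var v * QF_var w =
      Poly_Mapping.single (Poly_Mapping.single v 1 + Poly_Mapping.single w 1) c"
    by (simp add: QF_const_def QF_var_def mult_single)
  have k: "Poly_Mapping.keys (Poly_Mapping.single v (1::nat) + Poly_Mapping.single w 1) = {v, w}"
    using assms by (auto simp: in_keys_iff lookup_add lookup_single when_def split: if_splits)
  have "ev \<sigma> (Poly_Mapping.single v 1 + Poly_Mapping.single w 1) = \<sigma> v * \<sigma> w"
    unfolding ev_def k using assms by (simp add: lookup_add lookup_single when_def)
  then show ?thesis unfolding e QF_subst_single by (simp add: mult.assoc)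
qed

lemma var_pow: "QF_var v ^ k = Poly_Mapping.single (Poly_Mapping.single v k) 1"
proof (induction k)
  case 0 then show ?case by simp
next
  case (Suc k)
  then show ?case by (simp add: QF_var_def mult_single single_add[symmetric])
qed

lemma prod_singles:
  fixes f :: "psivar \<Rightarrow> psivar \<Rightarrow>\<^sub>0 nat"
  shows "(\<Prod>v\<in>A. (Poly_Mapping.single (f v) (1::rat) :: QF)) = Poly_Mapping.single (\<Sum>v\<in>A. f v) 1"
  by (induction A rule: infinite_finite_induct) (auto simp: mult_single)

lemma sum_single_lookup:
  "(\<Sum>v\<in>Poly_Mapping.keys mo. Poly_Mapping.single v (Poly_Mapping.lookup mo v)) = mo"
  by (rule poly_mapping_eqI)
     (auto simp: lookup_sum lookup_single when_def in_keys_iff sum.delta)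

lemma sum_single_lookup_QF:
  "(\<Sum>mo\<in>Poly_Mapping.keys p. Poly_Mapping.single mo (Poly_Mapping.lookup p mo)) = (p::QF)"
  by (rule poly_mapping_eqI)
     (auto simp: lookup_sum lookup_single when_def in_keys_iff sum.delta)

lemma ev_var: "ev QF_var mo = Poly_Mapping.single mo 1"
  unfolding ev_def var_pow prod_singles sum_single_lookup ..

lemma QF_subst_var_id: "QF_subst QF_var p = p"
proof -
  have "QF_subst QF_var p = (\<Sum>mo\<in>Poly_Mapping.keys p. Poly_Mapping.single mo (Poly_Mapping.lookup p mo))"
    unfolding QF_subst_def by (simp add: ev_var[unfolded ev_def] QF_const_def mult_single)
  then show ?thesis using sum_single_lookup_QF by simp
qed

lemma Psi_1: "Psi 1 p = p"
proof -
  have "(\<lambda>(a, b, c). QF_var (1 * (a + 1) - 1, b, c)) = QF_var" by auto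
  then show ?thesis unfolding Psi_def by (simp add: QF_subst_var_id)
qed

lemma Psi_var: "Psi k (QF_var (a, b, c)) = QF_var (k * (a + 1) - 1, b, c)"
  unfolding Psi_def by (simp add: QF_subst_var)



definition Xv :: "nat \<Rightarrow> nat \<Rightarrow> QF" where "Xv k i = QF_var (k - 1, i - 1, False)"
definition Yv :: "nat \<Rightarrow> nat \<Rightarrow> QF" where "Yv k i = QF_var (k - 1, i - 1, True)"

definition Qf :: "int \<Rightarrow> nat \<Rightarrow> QF" where
  "Qf m n = (\<Sum>i\<in>{i. i dvd n}. \<Sum>j\<in>{j. j dvd n}.
                  QF_const (coef_c m n i j) * Psi (n div i) (xv i) * Psi (n div j) (yv j))"

lemma Psi_xv: "Psi k (xv i) = Xv k i" by (simp add: xv_def Xv_def Psi_var)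
lemma Psi_yv: "Psi k (yv i) = Yv k i" by (simp add: yv_def Yv_def Psi_var)

lemma Psi_sum: "Psi k (sum f A) = (\<Sum>x\<in>A. Psi k (f x))"
  unfolding Psi_def by (rule QF_subst_sum)

lemma Psi_mono2: "v \<noteq> w \<Longrightarrow> Psi k (QF_const c * QF_var v * QF_var w) = QF_const c * Psi k (QF_var v) * Psi k (QF_var w)"
  unfolding Psi_def by (simp add: QF_subst_mono2 QF_subst_var)

lemma Psi_XY: "a \<ge> 1 \<Longrightarrow> b \<ge> 1 \<Longrightarrow>
   Psi k (QF_const c * Xv a i * Yv b j) = QF_const c * Xv (k * a) i * Yv (k * b) j"
  unfolding Xv_def Yv_def by (subst Psi_mono2) (auto simp: Psi_var)

lemma Psi_Q:
  assumes d: "d \<ge> 1"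
  shows "Psi k (Qf m d) = (\<Sum>i\<in>{i. i dvd d}. \<Sum>j\<in>{j. j dvd d}.
           QF_const (coef_c m d i j) * Xv (k * (d div i)) i * Yv (k * (d div j)) j)"
  unfolding Qf_def Psi_xv Psi_yv Psi_sum
proof (intro sum.cong refl)
  fix i j assume i: "i \<in> {i. i dvd d}" and j: "j \<in> {j. j dvd d}"
  have "d div i \<ge> 1" "d div j \<ge> 1" using i j d by (auto simp: Suc_leI div_pos_dvd)
  then show "Psi k (QF_const (coef_c m d i j) * Xv (d div i) i * Yv (d div j) j) =
        QF_const (coef_c m d i j) * Xv (k * (d div i)) i * Yv (k * (d div j)) j"
    by (rule Psi_XY)
qed



lemma coef_rat:
  assumes n: "n \<ge> 1" and i: "i dvd n" and j: "j dvd n"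
  shows "(\<Sum>d\<in>{d. d dvd n \<and> i dvd d \<and> j dvd d}. (of_int (int d * qint (n div d) m) :: rat) * coef_c m d i j)
     = of_int (1 - m) * of_int (int i * qint (n div i) m) * of_int (int j * qint (n div j) m)"
proof -
  define S where "S = (\<lambda>d. \<Sum>e\<in>{e. e dvd d div lcm i j}. qint (d div (e * i)) m * qint (d div (e * j)) m * mu_m m e)"
  have tm: "(of_int (int d * qint (n div d) m) :: rat) * coef_c m d i j
        = of_int (1 - m) * of_nat (i * j) * of_int (qint (n div d) m * S d)"
    if d: "d \<in> {d. d dvd n \<and> i dvd d \<and> j dvd d}" for d
  proof -
    have "d > 0" using d n by (auto intro: dvd_pos_nat[rotated])
    then show ?thesis unfolding coef_c_def S_def by (simp add: field_simps)
  qed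
  have "(\<Sum>d\<in>{d. d dvd n \<and> i dvd d \<and> j dvd d}. (of_int (int d * qint (n div d) m) :: rat) * coef_c m d i j)
      = (\<Sum>d\<in>{d. d dvd n \<and> i dvd d \<and> j dvd d}. of_int (1 - m) * of_nat (i * j) * of_int (qint (n div d) m * S d))"
    by (rule sum.cong[OF refl]) (rule tm)
  also have "\<dots> = of_int (1 - m) * of_nat (i * j) * of_int (\<Sum>d\<in>{d. d dvd n \<and> i dvd d \<and> j dvd d}. qint (n div d) m * S d)"
    by (simp add: sum_distrib_left)
  also have "(\<Sum>d\<in>{d. d dvd n \<and> i dvd d \<and> j dvd d}. qint (n div d) m * S d) = qint (n div i) m * qint (n div j) m"
    unfolding S_def by (rule coef_int[OF n i j])
  finally show ?thesis by simp
qed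



lemma sum_divisors_sub:
  assumes "d dvd n" "(n::nat) \<ge> 1"
  shows "(\<Sum>i\<in>{i. i dvd d}. f i) = (\<Sum>i\<in>{i. i dvd n}. if i dvd d then f i else 0)"
proof -
  have e: "{i. i dvd d} = {i\<in>{i. i dvd n}. i dvd d}" using assms(1) by (auto intro: dvd_trans)
  have fin: "finite {i. i dvd n}" using assms(2) by simp
  show ?thesis unfolding e by (rule sum.inter_filter[OF fin])
qed

lemma Q_rec:
  assumes n: "n \<ge> 1"
  shows "(\<Sum>d\<in>{d. d dvd n}. of_int (int d * qint (n div d) m) * Psi (n div d) (Qf m d)) =
     of_int (1 - m) * (\<Sum>d\<in>{d. d dvd n}. of_int (int d * qint (n div d) m) * Psi (n div d) (xv d))
       * (\<Sum>d\<in>{d. d dvd n}. of_int (int d * qint (n div d) m) * Psi (n div d) (yv d))"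
proof -
  define w where "w = (\<lambda>d. (of_int (int d * qint (n div d) m) :: rat))"
  define T where "T = (\<lambda>i j. Xv (n div i) i * Yv (n div j) j)"
  define Dn where "Dn = {d. d dvd n}"
  have finDn: "finite Dn" using n by (simp add: Dn_def)
  have "(\<Sum>d\<in>Dn. of_int (int d * qint (n div d) m) * Psi (n div d) (Qf m d))
      = (\<Sum>d\<in>Dn. \<Sum>i\<in>Dn. \<Sum>j\<in>Dn. if i dvd d \<and> j dvd d then QF_const (w d * coef_c m d i j) * T i j else 0)"
  proof (rule sum.cong[OF refl])
    fix d assume d: "d \<in> Dn"
    have dpos: "d \<ge> 1" using d n by (auto simp: Dn_def Suc_leI intro: dvd_pos_nat[rotated])
    have key: "(n div d) * (d div i) = n div i" if idv: "i dvd d" for i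
    proof -
      obtain k where k: "n = d * k" using d by (auto simp: Dn_def elim: dvdE)
      obtain l where l: "d = i * l" using idv by (auto elim: dvdE)
      have ipos: "i > 0" using l dpos by (cases "i = 0") auto
      show ?thesis using k l dpos ipos by (simp add: mult.assoc)
    qed
    have "of_int (int d * qint (n div d) m) * Psi (n div d) (Qf m d)
        = QF_const (w d) * (\<Sum>i\<in>{i. i dvd d}. \<Sum>j\<in>{j. j dvd d}.
             QF_const (coef_c m d i j) * T i j)"
      unfolding Psi_Q[OF dpos] w_def QF_const_of_int[symmetric] T_def
      by (rule arg_cong2[where f="(*)"], rule refl, intro sum.cong refl, simp add: key mult.assoc)
    also have "\<dots> = (\<Sum>i\<in>{i. i dvd d}. \<Sum>j\<in>{j. j dvd d}. QF_const (w d * coef_c m d i j) * T i j)"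
      by (simp add: sum_distrib_left QF_const_mult mult.assoc)
    also have "\<dots> = (\<Sum>i\<in>Dn. if i dvd d then (\<Sum>j\<in>Dn. if j dvd d then QF_const (w d * coef_c m d i j) * T i j else 0) else 0)"
      using d n unfolding Dn_def by (simp add: sum_divisors_sub[of d n])
    also have "\<dots> = (\<Sum>i\<in>Dn. \<Sum>j\<in>Dn. if i dvd d \<and> j dvd d then QF_const (w d * coef_c m d i j) * T i j else 0)"
      by (rule sum.cong[OF refl]) auto
    finally show "of_int (int d * qint (n div d) m) * Psi (n div d) (Qf m d) =
        (\<Sum>i\<in>Dn. \<Sum>j\<in>Dn. if i dvd d \<and> j dvd d then QF_const (w d * coef_c m d i j) * T i j else 0)" .
  qed
  also have "\<dots> = (\<Sum>i\<in>Dn. \<Sum>j\<in>Dn. \<Sum>d\<in>Dn. if i dvd d \<and> j dvd d then QF_const (w d * coef_c m d i j) * T i j else 0)"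
    apply (rule trans[OF sum.swap])
    apply (rule sum.cong[OF refl])
    apply (rule sum.swap)
    done
  also have "\<dots> = (\<Sum>i\<in>Dn. \<Sum>j\<in>Dn. QF_const (of_int (1 - m) * of_int (int i * qint (n div i) m) * of_int (int j * qint (n div j) m)) * T i j)"
  proof (intro sum.cong refl)
    fix i j assume i: "i \<in> Dn" and j: "j \<in> Dn"
    have "(\<Sum>d\<in>Dn. if i dvd d \<and> j dvd d then QF_const (w d * coef_c m d i j) * T i j else 0)
        = (\<Sum>d\<in>{d\<in>Dn. i dvd d \<and> j dvd d}. QF_const (w d * coef_c m d i j) * T i j)"
      using finDn by (simp add: sum.inter_filter)
    also have "\<dots> = QF_const (\<Sum>d\<in>{d. d dvd n \<and> i dvd d \<and> j dvd d}. w d * coef_c m d i j) * T i j"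
      by (simp add: Dn_def QF_const_sum sum_distrib_right)
    also have "\<dots> = QF_const (of_int (1 - m) * of_int (int i * qint (n div i) m) * of_int (int j * qint (n div j) m)) * T i j"
      unfolding w_def using coef_rat[OF n, of i j m] i j by (simp add: Dn_def)
    finally show "(\<Sum>d\<in>Dn. if i dvd d \<and> j dvd d then QF_const (w d * coef_c m d i j) * T i j else 0)
        = QF_const (of_int (1 - m) * of_int (int i * qint (n div i) m) * of_int (int j * qint (n div j) m)) * T i j" .
  qed
  also have "\<dots> = (\<Sum>i\<in>Dn. \<Sum>j\<in>Dn. (of_int (1 - m) * (of_int (int i * qint (n div i) m) * Xv (n div i) i))
        * (of_int (int j * qint (n div j) m) * Yv (n div j) j))"
    unfolding T_def
    by (intro sum.cong refl) (simp only: QF_const_mult QF_const_of_int mult.assoc mult.left_commute)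
  also have "\<dots> = (\<Sum>i\<in>Dn. of_int (1 - m) * (of_int (int i * qint (n div i) m) * Xv (n div i) i))
        * (\<Sum>j\<in>Dn. of_int (int j * qint (n div j) m) * Yv (n div j) j)"
    by (rule sum_product[symmetric])
  also have "\<dots> = of_int (1 - m) * (\<Sum>d\<in>Dn. of_int (int d * qint (n div d) m) * Psi (n div d) (xv d))
       * (\<Sum>d\<in>Dn. of_int (int d * qint (n div d) m) * Psi (n div d) (yv d))"
    unfolding Psi_xv Psi_yv by (simp only: sum_distrib_left)
  finally show ?thesis unfolding Dn_def .
qed

theorem proposition5p14:
  fixes m :: int and n :: nat and P :: "nat \<Rightarrow> QF"
  assumes P_def: "\<And>k. k \<ge> 1 \<Longrightarrow> P_rec m P k"
    and n_pos: "n \<ge> 1"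
  shows "P n = (\<Sum>i\<in>{i. i dvd n}. \<Sum>j\<in>{j. j dvd n}.
                  QF_const (coef_c m n i j) * Psi (n div i) (xv i) * Psi (n div j) (yv j))"
proof -
  have "P n = Qf m n" using n_pos
  proof (induction n rule: less_induct)
    case (less n)
    have fin: "finite {d. d dvd n}" using less.prems by simp
    have IH: "\<And>d. d \<in> {d. d dvd n} - {n} \<Longrightarrow> P d = Qf m d"
    proof -
      fix d assume d: "d \<in> {d. d dvd n} - {n}"
      then have "d \<le> n" "d \<noteq> n" "d \<ge> 1" using less.prems
        by (auto intro: dvd_imp_le simp: Suc_leI intro: dvd_pos_nat[rotated])
      then show "P d = Qf m d" using less.IH[of d] by simp
    qed
    define W where "W = (\<lambda>d. (of_int (int d * qint (n div d) m) :: QF))"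
    have split: "(\<Sum>d\<in>{d. d dvd n}. W d * Psi (n div d) (R d)) =
        W n * R n + (\<Sum>d\<in>{d. d dvd n} - {n}. W d * Psi (n div d) (R d))" for R
      using fin less.prems by (subst sum.remove[of _ n]) (auto simp: Psi_1[unfolded One_nat_def])
    have "(\<Sum>d\<in>{d. d dvd n}. W d * Psi (n div d) (P d)) = (\<Sum>d\<in>{d. d dvd n}. W d * Psi (n div d) (Qf m d))"
      using P_def[OF less.prems] Q_rec[OF less.prems, of m] unfolding P_rec_def W_def by simp
    moreover have eqs: "(\<Sum>d\<in>{d. d dvd n} - {n}. W d * Psi (n div d) (P d)) =
        (\<Sum>d\<in>{d. d dvd n} - {n}. W d * Psi (n div d) (Qf m d))"
      by (rule sum.cong[OF refl]) (simp add: IH)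
    ultimately have "W n * P n = W n * Qf m n"
      unfolding split by simp
    then have "QF_const (1 / of_nat n) * (W n * P n) = QF_const (1 / of_nat n) * (W n * Qf m n)" by simp
    moreover have "QF_const (1 / of_nat n) * W n = 1"
      using less.prems by (simp add: W_def QF_const_of_int QF_const_mult[symmetric])
    ultimately show ?case by (simp add: mult.assoc[symmetric])
  qed
  then show ?thesis unfolding Qf_def .
qed

end
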